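(* Let $d\in\mathbb{N}$ and $0<\eta<1/d$. Then $\mathcal{D}(\eta)^c\setminus K_d^c\subseteq S(\omega)$ for every $\omega$ with $0<\omega<1/(d\eta+d-1)$.
   Context: For $\boldsymbol{x}\in\mathbb{R}^d$, $|\boldsymbol{x}|=\max_i|x_i|$ and $\|\boldsymbol{x}\|=\min_{\boldsymbol{p}\in\mathbb{Z}^d}|\boldsymbol{x}-\boldsymbol{p}|$. For $\boldsymbol{\alpha}\in\mathbb{R}^d$, let $\mathcal{A}_\eta(\boldsymbol{\alpha})$ be the set of accumulation points of $\{|q|^{\eta}(q\boldsymbol{\alpha}-\boldsymbol{p}):q\in\mathbb{Z}\setminus\{0\},\ \boldsymbol{p}\in\mathbb{Z}^d\}$, $\mathcal{D}(\eta)=\{\boldsymbol{\alpha}\in\mathbb{R}^d:\mathcal{A}_\eta(\boldsymbol{\alpha})=\mathbb{R}^d\}$ and $\mathcal{D}(\eta)^c=\mathbb{R}^d\setminus\mathcal{D}(\eta)$. $K_d$ is the set of $\boldsymbol{\alpha}\in\mathbb{R}^d$ with $1,\alpha_1,\dots,\alpha_d$ linearly independent over $\mathbb{Q}$, and $K_d^c=\mathbb{R}^d\setminus K_d$. For $\omega>0$, \[S(\omega)=\left\{\boldsymbol{\alpha}\in K_d:\lim_{Q\to\infty}Q^\omega\min_{0<q\le Q,\ q\in\mathbb{Z}}\|q\boldsymbol{\alpha}\|=0\right\}.\] *)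

theory Defs
  imports "HOL-Analysis.Analysis"
begin

text \<open>Vectors in R^d are modelled as real^'n with d = CARD('n).\<close>

definition supnorm :: "real^'n \<Rightarrow> real" where
  "supnorm x = Max (range (\<lambda>i. \<bar>x $ i\<bar>))"

definition intvecs :: "(real^'n) set" where
  "intvecs = {p. \<forall>i. p $ i \<in> \<int>}"

definition distZ :: "real^'n \<Rightarrow> real" where
  "distZ x = Inf {supnorm (x - p) | p. p \<in> intvecs}"

definition accA :: "real \<Rightarrow> real^'n \<Rightarrow> (real^'n) set" where
  "accA \<eta> \<alpha> = {x. x islimpt
      {(\<bar>real_of_int q\<bar> powr \<eta>) *\<^sub>R (real_of_int q *\<^sub>R \<alpha> - p) | q p.
          q \<noteq> 0 \<and> p \<in> intvecs}}"

definition Dset :: "real \<Rightarrow> (real^'n) set" where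
  "Dset \<eta> = {\<alpha>. accA \<eta> \<alpha> = UNIV}"

definition Kset :: "(real^'n) set" where
  "Kset = {\<alpha>. \<forall>c0 c. c0 \<in> \<rat> \<and> (\<forall>i. c i \<in> \<rat>) \<and> c0 + (\<Sum>i\<in>UNIV. c i * \<alpha> $ i) = 0
                 \<longrightarrow> c0 = 0 \<and> (\<forall>i. c i = 0)}"

definition Sset :: "real \<Rightarrow> (real^'n) set" where
  "Sset \<omega> = {\<alpha>. \<alpha> \<in> Kset \<and>
     (\<lambda>Q::nat. real Q powr \<omega> *
        Min {distZ (real_of_int q *\<^sub>R \<alpha>) | q::int. 0 < q \<and> q \<le> int Q}) \<longlonglongrightarrow> 0}"

end

theory Submission
  imports Defs
begin
lemma count_hyperplane:
  fixes S :: "(real^'m) set" and n :: "real^'m" and R :: real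
  assumes fin: "finite S"
    and sep: "\<And>s t. s \<in> S \<Longrightarrow> t \<in> S \<Longrightarrow> s \<noteq> t \<Longrightarrow> \<exists>i. 1 \<le> \<bar>s$i - t$i\<bar>"
    and bnd: "\<And>s i. s \<in> S \<Longrightarrow> \<bar>s$i\<bar> \<le> R"
    and nz: "n \<noteq> 0" and orth: "\<And>s. s \<in> S \<Longrightarrow> n \<bullet> s = 0"
  shows "card S \<le> (nat (2 * \<lceil>real CARD('m) * R\<rceil> + 1)) ^ (CARD('m) - 1)"
proof -
  define M where "M = real CARD('m)"
  have M1: "M \<ge> 1" unfolding M_def by simp
  have "Max (range (\<lambda>i. \<bar>n$i\<bar>)) \<in> range (\<lambda>i. \<bar>n$i\<bar>)" by (rule Max_in) auto
  then obtain j where j: "\<bar>n$j\<bar> = Max (range (\<lambda>i. \<bar>n$i\<bar>))" by (metis (no_types, lifting) imageE)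
  have jmax: "\<bar>n$i\<bar> \<le> \<bar>n$j\<bar>" for i unfolding j by (rule Max_ge) auto
  obtain i0 where "n$i0 \<noteq> 0" using nz by (metis vec_eq_iff zero_index)
  hence nj: "\<bar>n$j\<bar> > 0" using jmax[of i0] by linarith
  define K where "K = \<lceil>M * R\<rceil>"
  define key where "key s = (\<lambda>i. if i = j then 0 else \<lfloor>M * s$i\<rfloor>)" for s :: "real^'m"
  define C where "C = PiE UNIV (\<lambda>i. if i = j then {0} else {-K..K})"
  show ?thesis
  proof (cases "S = {}")
    case True thus ?thesis by simp
  next
    case False
    then obtain s0 where "s0 \<in> S" by auto
    hence R0: "R \<ge> 0" using bnd[of s0] by (meson abs_ge_zero order_trans)
    have keyC: "key s \<in> C" if "s \<in> S" for s
    proof -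
      have "\<lfloor>M * s$i\<rfloor> \<in> {-K..K}" for i
      proof -
        have a: "\<bar>s$i\<bar> \<le> R" using bnd that by auto
        have "M * s$i \<le> M * R" using a M1 by (intro mult_left_mono) auto
        hence u: "\<lfloor>M * s$i\<rfloor> \<le> K" unfolding K_def by linarith
        have "M * (-R) \<le> M * s$i" using a M1 by (intro mult_left_mono) auto
        hence "-(M * R) \<le> M * s$i" by simp
        hence "\<lfloor>M * s$i\<rfloor> \<ge> -K" unfolding K_def by linarith
        thus ?thesis using u by auto
      qed
      thus ?thesis unfolding key_def C_def by auto
    qed
    have inj: "inj_on key S"
    proof (rule inj_onI, rule ccontr)
      fix s t assume s: "s \<in> S" and t: "t \<in> S" and kst: "key s = key t" and ne: "s \<noteq> t"
      define g where "g = s - t"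
      have gi: "\<bar>g$i\<bar> < 1 / M" if "i \<noteq> j" for i
      proof -
        have "\<lfloor>M * s$i\<rfloor> = \<lfloor>M * t$i\<rfloor>" using kst that unfolding key_def by meson
        hence "\<bar>M * s$i - M * t$i\<bar> < 1" by linarith
        hence "M * \<bar>g$i\<bar> < 1" unfolding g_def using M1
          by (simp add: right_diff_distrib[symmetric] abs_mult)
        thus ?thesis using M1 by (simp add: field_simps)
      qed
      have "n \<bullet> g = 0" unfolding g_def using orth s t by (simp add: inner_diff_right)
      hence "(\<Sum>i\<in>UNIV. n$i * g$i) = 0" by (simp add: inner_vec_def)
      hence "n$j * g$j + (\<Sum>i\<in>UNIV-{j}. n$i * g$i) = 0"
        by (simp add: sum.remove[of UNIV j])
      hence "\<bar>n$j * g$j\<bar> = \<bar>\<Sum>i\<in>UNIV-{j}. n$i * g$i\<bar>" by linarith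
      also have "\<dots> \<le> (\<Sum>i\<in>UNIV-{j}. \<bar>n$i * g$i\<bar>)" by (rule sum_abs)
      also have "\<dots> \<le> (\<Sum>i\<in>UNIV-{j}. \<bar>n$j\<bar> * \<bar>g$i\<bar>)"
        by (intro sum_mono) (simp add: abs_mult jmax mult_right_mono)
      also have "\<dots> = \<bar>n$j\<bar> * (\<Sum>i\<in>UNIV-{j}. \<bar>g$i\<bar>)" by (simp add: sum_distrib_left)
      finally have "\<bar>g$j\<bar> \<le> (\<Sum>i\<in>UNIV-{j}. \<bar>g$i\<bar>)" using nj by (simp add: abs_mult)
      also have "\<dots> \<le> real (card (UNIV - {j} :: 'm set)) * (1 / M)"
        using sum_bounded_above[of "UNIV - {j}" "\<lambda>i. \<bar>g$i\<bar>" "1/M"] gi by fastforce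
      also have "\<dots> = (M - 1) / M" unfolding M_def by (simp add: card_Diff_singleton)
      also have "\<dots> < 1" using M1 by simp
      finally have "\<bar>g$j\<bar> < 1" .
      moreover have "\<bar>g$i\<bar> < 1" if "i \<noteq> j" for i
        using gi[OF that] M1 by (smt (verit) divide_le_eq_1)
      ultimately have "\<forall>i. \<bar>g$i\<bar> < 1" by metis
      thus False using sep[OF s t ne] unfolding g_def by (metis linorder_not_less vector_minus_component)
    qed
    have "card S = card (key ` S)" using inj by (simp add: card_image)
    also have "\<dots> \<le> card C" using keyC by (intro card_mono) (auto simp: C_def intro!: finite_PiE)
    also have "card C = (\<Prod>i\<in>UNIV. card (if i = j then {0} else {-K..K}))"
      unfolding C_def by (simp add: card_PiE)
    also have "\<dots> = card {0::int} * (\<Prod>i\<in>UNIV-{j}. card (if i = j then {0} else {-K..K}))"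
      by (simp add: prod.remove[of UNIV j])
    also have "(\<Prod>i\<in>UNIV-{j}. card (if i = j then {0} else {-K..K})) = (\<Prod>i\<in>UNIV-{j}. card {-K..K})"
      by (rule prod.cong) auto
    also have "\<dots> = (nat (2*K+1)) ^ (CARD('m) - 1)"
      by (simp add: card_Diff_singleton)
    finally show ?thesis unfolding K_def M_def by simp
  qed
qed

definition Lv :: "real \<Rightarrow> real \<Rightarrow> real^'n \<Rightarrow> int \<Rightarrow> real^'n \<Rightarrow> real^('n option)" where
  "Lv Q \<delta> \<alpha> q p = (\<chi> i. case i of None \<Rightarrow> of_int q / Q | Some j \<Rightarrow> (of_int q * \<alpha>$j - p$j) / \<delta>)"

lemma Lv_None [simp]: "Lv Q \<delta> \<alpha> q p $ None = of_int q / Q"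
  by (simp add: Lv_def)
lemma Lv_Some [simp]: "Lv Q \<delta> \<alpha> q p $ Some j = (of_int q * \<alpha>$j - p$j) / \<delta>"
  by (simp add: Lv_def)

lemma Lv_add: "Lv Q \<delta> \<alpha> q1 p1 + Lv Q \<delta> \<alpha> q2 p2 = Lv Q \<delta> \<alpha> (q1+q2) (p1+p2)"
  unfolding vec_eq_iff Lv_def
  by (auto split: option.split simp: add_divide_distrib[symmetric] algebra_simps) 
lemma Lv_diff: "Lv Q \<delta> \<alpha> q1 p1 - Lv Q \<delta> \<alpha> q2 p2 = Lv Q \<delta> \<alpha> (q1-q2) (p1-p2)"
  unfolding vec_eq_iff Lv_def
  by (auto split: option.split simp: diff_divide_distrib add_divide_distrib algebra_simps) 
lemma Lv_smult: "of_int k *\<^sub>R Lv Q \<delta> \<alpha> q p = Lv Q \<delta> \<alpha> (k*q) (of_int k *\<^sub>R p)"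
  unfolding vec_eq_iff Lv_def
  by (auto split: option.split simp: algebra_simps) 
lemma Lv_zero: "Lv Q \<delta> \<alpha> 0 0 = 0"
  unfolding vec_eq_iff Lv_def by (auto split: option.split)

lemma intvecs_add: "p \<in> intvecs \<Longrightarrow> p' \<in> intvecs \<Longrightarrow> p + p' \<in> intvecs"
  by (auto simp: intvecs_def)
lemma intvecs_diff: "p \<in> intvecs \<Longrightarrow> p' \<in> intvecs \<Longrightarrow> p - p' \<in> intvecs"
  by (auto simp: intvecs_def)
lemma intvecs_smult: "p \<in> intvecs \<Longrightarrow> of_int k *\<^sub>R p \<in> intvecs"
  by (auto simp: intvecs_def)
lemma intvecs_zero: "0 \<in> intvecs"
  by (auto simp: intvecs_def)
lemma intvecs_uminus: "p \<in> intvecs \<Longrightarrow> - p \<in> intvecs"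
  by (auto simp: intvecs_def)

lemma Lv_combination:
  assumes "finite B" "B \<subseteq> {Lv Q \<delta> \<alpha> q p | q p. p \<in> intvecs}"
  shows "(\<Sum>b\<in>B. of_int (k b) *\<^sub>R b) \<in> {Lv Q \<delta> \<alpha> q p | q p. p \<in> intvecs}"
  using assms
proof (induction B rule: finite_induct)
  case empty
  then show ?case using Lv_zero intvecs_zero by force
next
  case (insert b B)
  then obtain q p where qp: "p \<in> intvecs" "(\<Sum>b\<in>B. of_int (k b) *\<^sub>R b) = Lv Q \<delta> \<alpha> q p" by auto
  from insert obtain q' p' where qp': "p' \<in> intvecs" "b = Lv Q \<delta> \<alpha> q' p'" by auto
  have "(\<Sum>b\<in>insert b B. of_int (k b) *\<^sub>R b) = Lv Q \<delta> \<alpha> (k b * q') (of_int (k b) *\<^sub>R p') + Lv Q \<delta> \<alpha> q p"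
    using insert qp qp' by (simp add: Lv_smult)
  also have "\<dots> = Lv Q \<delta> \<alpha> (k b * q' + q) (of_int (k b) *\<^sub>R p' + p)" by (simp add: Lv_add)
  finally show ?case using qp qp' intvecs_add intvecs_smult by blast
qed

lemma Lv_sep:
  fixes \<alpha> :: "real^'n"
  assumes Q: "Q > 0" and d: "0 < \<delta>" "\<delta> \<le> 1"
    and hyp: "\<And>q p. 1 \<le> q \<Longrightarrow> real_of_int q \<le> Q \<Longrightarrow> p \<in> intvecs \<Longrightarrow> \<exists>i. \<delta> \<le> \<bar>of_int q * \<alpha>$i - p$i\<bar>"
    and p: "p \<in> intvecs" and nz: "Lv Q \<delta> \<alpha> q p \<noteq> 0"
  shows "\<exists>i. 1 \<le> \<bar>Lv Q \<delta> \<alpha> q p $ i\<bar>"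
proof (cases "q = 0")
  case True
  have "p \<noteq> 0" using nz True Lv_zero by metis
  then obtain j where pj: "p$j \<noteq> 0" by (metis vec_eq_iff zero_index)
  have "p$j \<in> \<int>" using p by (auto simp: intvecs_def)
  then obtain m where m: "p$j = of_int m" by (auto elim: Ints_cases)
  with pj have "\<bar>p$j\<bar> \<ge> 1" by auto
  hence "\<bar>p$j\<bar> / \<delta> \<ge> 1" using d by (simp add: le_divide_eq)
  hence "1 \<le> \<bar>Lv Q \<delta> \<alpha> q p $ Some j\<bar>" using True d by simp
  thus ?thesis by blast
next
  case False
  show ?thesis
  proof (cases "\<bar>real_of_int q\<bar> \<le> Q")
    case False
    hence "1 \<le> \<bar>Lv Q \<delta> \<alpha> q p $ None\<bar>" using Q by (simp add: le_divide_eq)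
    thus ?thesis by blast
  next
    case True
    show ?thesis
    proof (cases "q > 0")
      case qpos: True
      obtain i where "\<delta> \<le> \<bar>of_int q * \<alpha>$i - p$i\<bar>" using hyp[of q p] qpos True p by auto
      hence "1 \<le> \<bar>Lv Q \<delta> \<alpha> q p $ Some i\<bar>" using d by (simp add: le_divide_eq)
      thus ?thesis by blast
    next
      case qneg: False
      hence "1 \<le> -q" using \<open>q \<noteq> 0\<close> by linarith
      moreover have "real_of_int (-q) \<le> Q" using True qneg by linarith
      moreover have "-p \<in> intvecs" using p intvecs_uminus by blast
      ultimately obtain i where "\<delta> \<le> \<bar>of_int (-q) * \<alpha>$i - (-p)$i\<bar>" using hyp by blast
      hence "\<delta> \<le> \<bar>of_int q * \<alpha>$i - p$i\<bar>" by (simp add: abs_minus_commute)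
      hence "1 \<le> \<bar>Lv Q \<delta> \<alpha> q p $ Some i\<bar>" using d by (simp add: le_divide_eq)
      thus ?thesis by blast
    qed
  qed
qed

lemma covering:
  fixes \<alpha> z :: "real^'n" and T Q \<delta> R :: real
  assumes Q: "Q > 0" and d: "0 < \<delta>" "\<delta> \<le> 1"
    and hyp: "\<And>q p. 1 \<le> q \<Longrightarrow> real_of_int q \<le> Q \<Longrightarrow> p \<in> intvecs \<Longrightarrow> \<exists>i. \<delta> \<le> \<bar>of_int q * \<alpha>$i - p$i\<bar>"
    and R1: "R \<ge> 1" and Rd: "R * \<delta> \<le> 1"
    and cnt: "(10 * real (CARD('n) + 1)) ^ CARD('n) \<le> R * Q * \<delta> ^ CARD('n)"
  shows "\<exists>q p. p \<in> intvecs \<and> \<bar>of_int q - T\<bar> \<le> real (CARD('n) + 1) * R * Q \<and>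
           (\<forall>j. \<bar>of_int q * \<alpha>$j - p$j - z$j\<bar> \<le> real (CARD('n) + 1) * R * \<delta>)"
proof -
  define dd where "dd = CARD('n)"
  define M where "M = real (dd + 1)"
  have M1: "M \<ge> 1" unfolding M_def by simp
  have cardopt: "CARD('n option) = dd + 1" unfolding dd_def by (simp add: card_option)
  define N where "N = nat \<lfloor>R * Q\<rfloor> + 1"
  define K where "K = nat \<lceil>1 / (R * \<delta>)\<rceil>"
  define U where "U = nat (2 * \<lceil>real CARD('n option) * R\<rceil> + 1) ^ (CARD('n option) - 1)"
  have Rdpos: "R * \<delta> > 0" using R1 d by simp
  have invRd: "1 / (R * \<delta>) \<ge> 1" using Rdpos Rd by (simp add: le_divide_eq)
  have RQ: "R * Q > 0" using R1 Q by simp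
  have realN: "real N > R * Q" unfolding N_def using RQ by linarith
  have Kge: "real K \<ge> 1 / (R * \<delta>)" unfolding K_def by linarith
  have Kpos: "K > 0" using Kge invRd by linarith
  have Kle: "real K \<le> 2 / (R * \<delta>)" unfolding K_def using invRd by linarith
  have U_le: "real U \<le> (5 * M * R) ^ dd"
  proof -
    have "0 \<le> M * R" using M1 R1 by simp
    hence c0: "0 \<le> \<lceil>M * R\<rceil>" by linarith
    have "real CARD('n option) = M" unfolding M_def cardopt by simp
    hence "real (nat (2 * \<lceil>real CARD('n option) * R\<rceil> + 1)) = real (nat (2 * \<lceil>M * R\<rceil> + 1))" by simp
    also have "\<dots> = 2 * \<lceil>M * R\<rceil> + 1" using c0 by simp
    also have "\<dots> \<le> 5 * M * R"
    proof -
      have "of_int \<lceil>M * R\<rceil> \<le> M * R + 1" by linarith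
      moreover have "M * R \<ge> 1" using mult_mono[OF M1 R1] M1 by simp
      ultimately show ?thesis by linarith
    qed
    finally have "real (nat (2 * \<lceil>real CARD('n option) * R\<rceil> + 1)) \<le> 5 * M * R" .
    hence "real (nat (2 * \<lceil>real CARD('n option) * R\<rceil> + 1)) ^ dd \<le> (5 * M * R) ^ dd"
      by (intro power_mono) auto
    thus ?thesis unfolding U_def cardopt by simp
  qed
  have UK: "real U * real K ^ dd < real N"
  proof -
    have "real U * real K ^ dd \<le> (5 * M * R) ^ dd * (2 / (R * \<delta>)) ^ dd"
      using U_le Kle by (intro mult_mono power_mono) auto
    also have "\<dots> = (10 * M) ^ dd / \<delta> ^ dd"
    proof -
      have e1: "5 * M * R * (2 / (R * \<delta>)) = 10 * M / \<delta>" using R1 d by (simp add: field_simps)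
      have "(5 * M * R) ^ dd * (2 / (R * \<delta>)) ^ dd = (10 * M / \<delta>) ^ dd"
        by (simp only: power_mult_distrib[symmetric] e1)
      thus ?thesis by (simp only: power_divide)
    qed
    also have "\<dots> \<le> R * Q" using cnt d unfolding M_def dd_def by (simp add: divide_le_eq)
    finally show ?thesis using realN by linarith
  qed
  define cell where "cell q = (\<lambda>j. nat \<lfloor>frac (real q * \<alpha>$j) * real K\<rfloor>)" for q :: nat
  define C where "C = PiE (UNIV :: 'n set) (\<lambda>_. {..<K})"
  have cellC: "cell \<in> {..<N} \<rightarrow> C"
  proof
    fix q assume "q \<in> {..<N}"
    have "nat \<lfloor>frac (real q * \<alpha>$j) * real K\<rfloor> < K" for j
    proof -
      have "frac (real q * \<alpha>$j) * real K < real K"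
        using frac_lt_1 Kpos by (simp add: mult_less_cancel_right2)
      thus ?thesis using Kpos by (simp add: nat_less_iff floor_less_iff)
    qed
    thus "cell q \<in> C" unfolding cell_def C_def by auto
  qed
  have cardC: "card C = K ^ dd" unfolding C_def dd_def by (simp add: card_PiE)
  have "cell 0 \<in> C" using cellC unfolding N_def by auto
  hence "C \<noteq> {}" by blast
  have finC: "finite C" unfolding C_def by (intro finite_PiE) auto
  then obtain y where y: "y \<in> C" and yc: "card {..<N} \<le> card (cell -` {y} \<inter> {..<N}) * card C"
    using pigeonhole_card[OF cellC finite_lessThan finC \<open>C \<noteq> {}\<close>] by blast
  define F where "F = cell -` {y} \<inter> {..<N}"
  have finF: "finite F" unfolding F_def by auto
  have cardF: "card F > U"
  proof (rule ccontr)
    assume "\<not> U < card F"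
    hence "card F * card C \<le> U * K ^ dd" using cardC by simp
    hence "N \<le> U * K ^ dd" using yc unfolding F_def by simp
    hence "real N \<le> real (U * K ^ dd)" by (simp only: of_nat_le_iff)
    hence "real N \<le> real U * real K ^ dd" by simp
    thus False using UK by linarith
  qed
  hence "F \<noteq> {}" by auto
  then obtain q0 where q0: "q0 \<in> F" by blast
  define fl where "fl q = (\<chi> j. (of_int \<lfloor>real q * \<alpha>$j\<rfloor> :: real))" for q :: nat
  have fl_int: "fl q \<in> intvecs" for q unfolding fl_def intvecs_def by auto
  define LG where "LG = {Lv Q \<delta> \<alpha> q p | q p. p \<in> intvecs}"
  define f where "f q = Lv Q \<delta> \<alpha> (int q - int q0) (fl q - fl q0)" for q
  define S where "S = f ` F"
  have injf: "inj_on f F"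
  proof (rule inj_onI)
    fix a b assume "f a = f b"
    hence "f a $ None = f b $ None" by simp
    thus "a = b" using Q unfolding f_def by simp
  qed
  have cardS: "card S > U" unfolding S_def using injf cardF by (simp add: card_image)
  have finS: "finite S" unfolding S_def using finF by simp
  have SLG: "S \<subseteq> LG" unfolding S_def LG_def f_def using fl_int intvecs_diff by blast
  have bnd: "\<bar>s$i\<bar> \<le> R" if sS: "s \<in> S" for s i
  proof -
    obtain q where q: "q \<in> F" and s: "s = f q" using sS unfolding S_def by blast
    have qN: "q < N" "q0 < N" using q q0 unfolding F_def by auto
    have cq: "cell q = y" "cell q0 = y" using q q0 unfolding F_def by auto
    show ?thesis
    proof (cases i)
      case None
      have "\<bar>real_of_int (int q - int q0)\<bar> \<le> real (N - 1)" using qN by linarith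
      also have "real (N - 1) \<le> R * Q" unfolding N_def using RQ by simp
      finally have "\<bar>real_of_int (int q - int q0)\<bar> / Q \<le> R" using Q by (simp add: divide_le_eq)
      thus ?thesis unfolding s f_def None using Q by simp
    next
      case (Some j)
      define a where "a = frac (real q * \<alpha>$j)"
      define b where "b = frac (real q0 * \<alpha>$j)"
      have "cell q j = cell q0 j" using cq by simp
      hence "nat \<lfloor>a * real K\<rfloor> = nat \<lfloor>b * real K\<rfloor>" unfolding cell_def a_def b_def by simp
      moreover have "\<lfloor>a * real K\<rfloor> \<ge> 0" "\<lfloor>b * real K\<rfloor> \<ge> 0" unfolding a_def b_def by (simp_all add: frac_ge_0)
      note fl0 = this
      ultimately have "\<lfloor>a * real K\<rfloor> = \<lfloor>b * real K\<rfloor>" using fl0 by (metis int_nat_eq)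
      hence "\<bar>a * real K - b * real K\<bar> < 1" by linarith
      hence "\<bar>a - b\<bar> * real K < 1" by (simp add: left_diff_distrib[symmetric] abs_mult)
      hence "\<bar>a - b\<bar> < 1 / real K" using Kpos by (simp add: less_divide_eq)
      also have "1 / real K \<le> R * \<delta>"
      proof -
        have "1 \<le> real K * (R * \<delta>)" using Kge Rdpos by (simp add: divide_le_eq)
        thus ?thesis using Kpos by (simp add: divide_le_eq mult.commute)
      qed
      finally have ab: "\<bar>a - b\<bar> < R * \<delta>" .
      have "f q $ Some j = (a - b) / \<delta>"
        unfolding f_def a_def b_def fl_def frac_def by (simp add: algebra_simps)
      hence "\<bar>f q $ Some j\<bar> = \<bar>a - b\<bar> / \<delta>" using d by simp
      also have "\<dots> \<le> R" using ab d by (simp add: divide_le_eq)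
      finally show ?thesis unfolding s Some .
    qed
  qed
  have sep: "\<exists>i. 1 \<le> \<bar>s$i - t$i\<bar>" if st: "s \<in> S" "t \<in> S" "s \<noteq> t" for s t
  proof -
    obtain q1 p1 where 1: "s = Lv Q \<delta> \<alpha> q1 p1" "p1 \<in> intvecs" using st(1) SLG unfolding LG_def by blast
    obtain q2 p2 where 2: "t = Lv Q \<delta> \<alpha> q2 p2" "p2 \<in> intvecs" using st(2) SLG unfolding LG_def by blast
    have e: "s - t = Lv Q \<delta> \<alpha> (q1 - q2) (p1 - p2)" using 1 2 Lv_diff by simp
    have "s - t \<noteq> 0" using st by simp
    hence "Lv Q \<delta> \<alpha> (q1 - q2) (p1 - p2) \<noteq> 0" using e by simp
    moreover have "p1 - p2 \<in> intvecs" using intvecs_diff 1 2 by blast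
    ultimately obtain i where "1 \<le> \<bar>Lv Q \<delta> \<alpha> (q1 - q2) (p1 - p2) $ i\<bar>"
      using Lv_sep[OF Q d hyp, of "p1 - p2" "q1 - q2"] by blast
    hence "1 \<le> \<bar>(s - t)$i\<bar>" using e by simp
    thus ?thesis by auto
  qed
  have noorth: False if "n \<noteq> 0" "\<And>s. s \<in> S \<Longrightarrow> n \<bullet> s = 0" for n :: "real^'n option"
  proof -
    have "card S \<le> U" unfolding U_def
      using count_hyperplane[OF finS sep bnd that] by blast
    thus False using cardS by simp
  qed
  have dimS: "dim S = DIM(real^'n option)"
  proof (rule ccontr)
    assume "dim S \<noteq> DIM(real^'n option)"
    hence lt: "dim S < DIM(real^'n option)" using dim_subset_UNIV[of S] by linarith
    obtain x :: "real^'n option" where "x \<noteq> 0" "\<And>y. y \<in> span S \<Longrightarrow> orthogonal x y"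
      using orthogonal_to_subspace_exists[OF lt] by blast
    thus False using noorth[of x] span_superset[of S] by (auto simp: orthogonal_def)
  qed
  obtain B where B: "B \<subseteq> S" "independent B" "S \<subseteq> span B" "card B = dim S"
    by (rule basis_exists)
  have finB: "finite B" using B independent_imp_finite by blast
  have cardB: "card B = dd + 1" using B dimS cardopt by simp
  have spanB: "span B = UNIV"
  proof -
    have "span S = UNIV" using dimS dim_eq_full by blast
    moreover have "span S \<subseteq> span B" using B by (simp add: span_minimal)
    ultimately show ?thesis by auto
  qed
  define yv :: "real^'n option" where "yv = (\<chi> i. case i of None \<Rightarrow> T / Q | Some j \<Rightarrow> z$j / \<delta>)"
  have "yv \<in> span B" using spanB by simp
  then obtain u where u: "yv = (\<Sum>b\<in>B. u b *\<^sub>R b)" using span_finite[OF finB] by auto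
  define g where "g = (\<Sum>b\<in>B. of_int \<lfloor>u b\<rfloor> *\<^sub>R b)"
  have "g \<in> LG" unfolding g_def LG_def
    by (rule Lv_combination[OF finB]) (use B SLG in \<open>auto simp: LG_def\<close>)
  then obtain q p where qp: "g = Lv Q \<delta> \<alpha> q p" "p \<in> intvecs" unfolding LG_def by auto
  have comp: "\<bar>yv$i - g$i\<bar> \<le> M * R" for i
  proof -
    have "yv - g = (\<Sum>b\<in>B. (u b - of_int \<lfloor>u b\<rfloor>) *\<^sub>R b)"
      unfolding u g_def by (simp add: sum_subtractf scaleR_diff_left)
    hence "(yv - g)$i = (\<Sum>b\<in>B. ((u b - of_int \<lfloor>u b\<rfloor>) *\<^sub>R b)$i)"
      by (simp only: sum_component)
    hence "yv$i - g$i = (\<Sum>b\<in>B. (u b - of_int \<lfloor>u b\<rfloor>) * b$i)"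
      by (simp only: vector_minus_component vector_scaleR_component real_scaleR_def)
    hence "\<bar>yv$i - g$i\<bar> \<le> (\<Sum>b\<in>B. \<bar>(u b - of_int \<lfloor>u b\<rfloor>) * b$i\<bar>)" by (simp add: sum_abs)
    also have "\<dots> \<le> (\<Sum>b\<in>B. R)"
    proof (rule sum_mono)
      fix b assume "b \<in> B"
      hence "\<bar>b$i\<bar> \<le> R" using bnd B by auto
      moreover have "\<bar>u b - of_int \<lfloor>u b\<rfloor>\<bar> \<le> 1" by linarith
      ultimately show "\<bar>(u b - of_int \<lfloor>u b\<rfloor>) * b$i\<bar> \<le> R"
        using mult_mono[of "\<bar>u b - of_int \<lfloor>u b\<rfloor>\<bar>" 1 "\<bar>b$i\<bar>" R] by (simp add: abs_mult)
    qed
    also have "\<dots> = M * R" using cardB unfolding M_def by simp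
    finally show ?thesis .
  qed
  have c1: "\<bar>of_int q - T\<bar> \<le> M * R * Q"
  proof -
    have "\<bar>T / Q - of_int q / Q\<bar> \<le> M * R" using comp[of None] qp unfolding yv_def by simp
    hence "\<bar>T - of_int q\<bar> / Q \<le> M * R" using Q by (simp add: diff_divide_distrib[symmetric])
    thus ?thesis using Q by (simp add: divide_le_eq abs_minus_commute)
  qed
  have c2: "\<bar>of_int q * \<alpha>$j - p$j - z$j\<bar> \<le> M * R * \<delta>" for j
  proof -
    have "\<bar>z$j / \<delta> - (of_int q * \<alpha>$j - p$j) / \<delta>\<bar> \<le> M * R" using comp[of "Some j"] qp unfolding yv_def by simp
    hence "\<bar>z$j - (of_int q * \<alpha>$j - p$j)\<bar> / \<delta> \<le> M * R" using d by (simp add: diff_divide_distrib[symmetric])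
    thus ?thesis using d by (simp add: divide_le_eq abs_minus_commute algebra_simps)
  qed
  show ?thesis using c1 c2 qp unfolding M_def dd_def by blast
qed

lemma pow_powr_mult: "t > 0 \<Longrightarrow> (c * t powr a) ^ n = c ^ n * t powr (a * real n)"
  by (simp add: power_mult_distrib powr_power mult.commute)

lemma alg_Rd:
  assumes t: "t > 0" and c: "c > 0"
  shows "A / (t * (c * t powr (-w)) ^ n) * (c * t powr (-w)) = (A * c / c ^ n) * t powr (w * real n - w - 1)"
proof -
  define u where "u = t powr (-w)"
  define P where "P = t powr (w * real n)"
  have u0: "u > 0" and P0: "P > 0" using t unfolding u_def P_def by auto
  have e1: "t powr (w * real n - w - 1) = P * u / t"
  proof -
    have "w * real n - w - 1 = w * real n + (-w) + (-1)" by simp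
    hence "t powr (w * real n - w - 1) = t powr (w * real n) * t powr (-w) * t powr (-1)"
      by (simp only: powr_add)
    moreover have "t powr (-1) = 1 / t" using t by (simp add: powr_minus_divide)
    ultimately show ?thesis unfolding u_def P_def by simp
  qed
  have "(c * u) ^ n = c ^ n * t powr (-(w * real n))" unfolding u_def using pow_powr_mult[OF t] by simp
  also have "\<dots> = c ^ n / P" unfolding P_def by (simp add: powr_minus_divide)
  finally have e2: "(c * u) ^ n = c ^ n / P" .
  show ?thesis unfolding u_def[symmetric] e1 e2 using t c u0 P0 by (simp add: field_simps)
qed

lemma alg_W:
  assumes t: "t > 0" and c: "c > 0"
  shows "M * (A / (t * (c * t powr (-w)) ^ n)) * t = (M * A / c ^ n) * t powr (w * real n)"
proof -
  define u where "u = t powr (-w)"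
  define P where "P = t powr (w * real n)"
  have u0: "u > 0" and P0: "P > 0" using t unfolding u_def P_def by auto
  have "(c * u) ^ n = c ^ n * t powr (-(w * real n))" unfolding u_def using pow_powr_mult[OF t] by simp
  also have "\<dots> = c ^ n / P" unfolding P_def by (simp add: powr_minus_divide)
  finally have e2: "(c * u) ^ n = c ^ n / P" .
  show ?thesis unfolding u_def[symmetric] P_def[symmetric] e2 using t c u0 P0 by (simp add: field_simps)
qed

lemma ev_small:
  assumes "\<kappa> > 0" "b > 0"
  shows "eventually (\<lambda>Q. A * real Q powr (-\<kappa>) \<le> b) sequentially"
proof -
  have "((\<lambda>Q. real Q powr (-\<kappa>)) \<longlongrightarrow> 0) sequentially"
    using assms by (intro tendsto_neg_powr filterlim_real_sequentially) auto
  hence "((\<lambda>Q. A * real Q powr (-\<kappa>)) \<longlongrightarrow> 0) sequentially" by (rule tendsto_mult_right_zero)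
  from order_tendstoD(2)[OF this \<open>b > 0\<close>] show ?thesis by (rule eventually_mono) auto
qed

lemma powr_near_one:
  fixes r \<eta> :: real
  assumes "r > 0" "0 \<le> \<eta>" "\<eta> \<le> 1"
  shows "\<bar>r powr \<eta> - 1\<bar> \<le> \<bar>r - 1\<bar>"
proof (cases "r \<ge> 1")
  case True
  have "1 \<le> r powr \<eta>" using powr_mono[of 0 \<eta> r] True assms by simp
  moreover have "r powr \<eta> \<le> r powr 1" using True assms by (intro powr_mono) auto
  ultimately show ?thesis using assms by simp
next
  case False
  have "r powr \<eta> \<le> 1" using False assms by (simp add: powr_le1)
  moreover have "r powr 1 \<le> r powr \<eta>" using False assms by (intro powr_mono') auto
  ultimately show ?thesis using assms False by simp
qed

lemma supnorm_ge: "\<bar>x$i\<bar> \<le> supnorm x"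
  unfolding supnorm_def by (rule Max_ge) auto

lemma supnorm_attained: "\<exists>i. supnorm x = \<bar>x$i\<bar>"
proof -
  have "Max (range (\<lambda>i. \<bar>x$i\<bar>)) \<in> range (\<lambda>i. \<bar>x$i\<bar>)" by (rule Max_in) auto
  thus ?thesis unfolding supnorm_def by (metis (no_types, lifting) imageE)
qed

lemma supnorm_nonneg: "0 \<le> supnorm x"
  using supnorm_ge[of x undefined] by linarith

lemma distZ_le: "p \<in> intvecs \<Longrightarrow> distZ v \<le> supnorm (v - p)"
  unfolding distZ_def
  by (rule cInf_lower) (auto intro!: bdd_belowI[of _ 0] simp: supnorm_nonneg)

lemma distZ_nonneg: "0 \<le> distZ v"
  unfolding distZ_def
  by (rule cInf_greatest) (auto simp: supnorm_nonneg intro: intvecs_zero)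

lemma Min_facts:
  fixes \<alpha> :: "real^'n"
  assumes "1 \<le> q" "q \<le> int Q"
  shows "Min {distZ (real_of_int q *\<^sub>R \<alpha>) | q::int. 0 < q \<and> q \<le> int Q} \<le> distZ (real_of_int q *\<^sub>R \<alpha>)"
    and "0 \<le> Min {distZ (real_of_int q *\<^sub>R \<alpha>) | q::int. 0 < q \<and> q \<le> int Q}"
proof -
  have eq: "{distZ (real_of_int q *\<^sub>R \<alpha>) | q::int. 0 < q \<and> q \<le> int Q} = (\<lambda>q. distZ (real_of_int q *\<^sub>R \<alpha>)) ` {1..int Q}"
    by auto
  have ne: "{1..int Q} \<noteq> {}" using assms by auto
  show "Min {distZ (real_of_int q *\<^sub>R \<alpha>) | q::int. 0 < q \<and> q \<le> int Q} \<le> distZ (real_of_int q *\<^sub>R \<alpha>)"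
    unfolding eq using assms by (intro Min_le) auto
  show "0 \<le> Min {distZ (real_of_int q *\<^sub>R \<alpha>) | q::int. 0 < q \<and> q \<le> int Q}"
    unfolding eq using ne by (subst Min_ge_iff) (auto simp: distZ_nonneg)
qed

lemma alg_final:
  fixes t B :: real
  assumes t: "t > 0" and B: "B \<ge> 0"
  shows "(B * t powr a) powr \<eta> * (D * t powr b) = (B powr \<eta> * D) * t powr (a * \<eta> + b)"
proof -
  have "(B * t powr a) powr \<eta> = B powr \<eta> * t powr (a * \<eta>)"
    using t B by (subst powr_mult) (auto simp: powr_powr)
  thus ?thesis by (simp add: powr_add)
qed

lemma main_acc:
  fixes \<alpha> x :: "real^'n" and \<eta> \<omega> c :: real
  assumes \<eta>: "0 < \<eta>" "\<eta> < 1 / real CARD('n)"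
    and \<omega>: "0 < \<omega>" "\<omega> < 1 / (real CARD('n) * \<eta> + real CARD('n) - 1)"
    and c: "c > 0"
    and freq: "frequently (\<lambda>Q. c \<le> \<bar>real Q powr \<omega> * Min {distZ (real_of_int q *\<^sub>R \<alpha>) | q::int. 0 < q \<and> q \<le> int Q}\<bar>) sequentially"
  shows "x \<in> accA \<eta> \<alpha>"
proof -
  define d where "d = CARD('n)"
  define dr where "dr = real d"
  have dr1: "dr \<ge> 1" unfolding dr_def d_def by simp
  define M where "M = real (d + 1)"
  have M1: "M \<ge> 1" unfolding M_def by simp
  define \<omega>' where "\<omega>' = max \<omega> (1 / dr)"
  define c' where "c' = min c 1"
  have c'0: "c' > 0" "c' \<le> 1" "c' \<le> c" unfolding c'_def using c by auto
  have \<omega>'ge: "\<omega>' \<ge> \<omega>" "\<omega>' \<ge> 1 / dr" unfolding \<omega>'_def by auto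
  have \<omega>'pos: "\<omega>' > 0" using \<omega>'ge \<omega> by linarith
  have \<omega>'dr: "\<omega>' * dr \<ge> 1" using \<omega>'ge(2) dr1 by (simp add: divide_le_eq mult.commute)
  have den: "dr * \<eta> + dr - 1 > 0" using dr1 \<eta> by (smt (verit) mult_pos_pos)
  have key: "\<omega>' * (dr * \<eta> + dr - 1) < 1"
  proof (cases "\<omega> \<ge> 1 / dr")
    case True
    hence "\<omega>' = \<omega>" unfolding \<omega>'_def by simp
    thus ?thesis using \<omega>(2) den unfolding dr_def d_def by (simp add: less_divide_eq)
  next
    case False
    hence "\<omega>' = 1 / dr" unfolding \<omega>'_def by simp
    moreover have "1 / dr * (dr * \<eta> + dr - 1) = \<eta> + 1 - 1 / dr" using dr1 by (simp add: field_simps)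
    moreover have "\<eta> < 1 / dr" using \<eta>(2) unfolding dr_def d_def .
    ultimately show ?thesis by simp
  qed
  have \<eta>1: "\<eta> \<le> 1"
  proof -
    have "1 / dr \<le> 1" using dr1 by simp
    thus ?thesis using \<eta>(2) unfolding dr_def d_def by linarith
  qed
  have \<omega>'\<eta>pos: "\<omega>' * dr * \<eta> > 0" using \<omega>'pos dr1 \<eta> by simp
  define \<kappa>1 where "\<kappa>1 = 1 + \<omega>' - \<omega>' * dr"
  define \<kappa>2 where "\<kappa>2 = 1 + \<omega>' - \<omega>' * dr - \<omega>' * dr * \<eta>"
  have \<kappa>2: "\<kappa>2 > 0" using key unfolding \<kappa>2_def by (simp add: algebra_simps)
  have \<kappa>1: "\<kappa>1 > 0" using \<kappa>2 \<omega>'\<eta>pos unfolding \<kappa>1_def \<kappa>2_def by linarith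
  show ?thesis unfolding accA_def mem_Collect_eq islimpt_approachable
  proof (intro allI impI)
    fix e :: real assume e: "e > 0"
    obtain i0 :: 'n where True by blast
    define x1 where "x1 = x + (e / 2) *\<^sub>R axis i0 1"
    have dx1: "dist x1 x = e / 2" unfolding x1_def dist_norm using e by (simp add: norm_axis_1)
    define K0 where "K0 = 2 + 8 * norm x1 / e"
    have K0: "K0 \<ge> 2" unfolding K0_def using e by simp
    have K0x: "norm x1 / K0 \<le> e / 8"
    proof -
      have "8 * norm x1 / e \<le> K0" unfolding K0_def by simp
      hence "8 * norm x1 \<le> K0 * e" using e by (simp add: divide_le_eq)
      thus ?thesis using K0 e by (simp add: divide_le_eq field_simps)
    qed
    define A1 where "A1 = (10 * M) ^ d * c' / c' ^ d"
    define A3 where "A3 = M * (10 * M) ^ d / c' ^ d"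
    have A3: "A3 > 0" unfolding A3_def using M1 c'0 by simp
    define A4 where "A4 = ((K0 + 1) * A3) powr \<eta> * (dr * M * A1)"
    have ev1: "eventually (\<lambda>Q. A1 * real Q powr (-\<kappa>1) \<le> 1) sequentially"
      using \<kappa>1 by (intro ev_small) auto
    have ev2: "eventually (\<lambda>Q. A4 * real Q powr (-\<kappa>2) \<le> e / 8) sequentially"
      using \<kappa>2 e by (intro ev_small) auto
    have ev3: "eventually (\<lambda>Q. (1::nat) \<le> Q) sequentially" by (rule eventually_ge_at_top)
    have "frequently (\<lambda>Q. (c \<le> \<bar>real Q powr \<omega> * Min {distZ (real_of_int q *\<^sub>R \<alpha>) | q::int. 0 < q \<and> q \<le> int Q}\<bar>)
           \<and> (A1 * real Q powr (-\<kappa>1) \<le> 1 \<and> A4 * real Q powr (-\<kappa>2) \<le> e / 8 \<and> 1 \<le> Q)) sequentially"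
      using frequently_eventually_frequently[OF freq eventually_conj[OF ev1 eventually_conj[OF ev2 ev3]]] .
    then obtain Q :: nat where
      Qc: "c \<le> \<bar>real Q powr \<omega> * Min {distZ (real_of_int q *\<^sub>R \<alpha>) | q::int. 0 < q \<and> q \<le> int Q}\<bar>"
      and Q1: "A1 * real Q powr (-\<kappa>1) \<le> 1" and Q2: "A4 * real Q powr (-\<kappa>2) \<le> e / 8" and Q3: "1 \<le> Q"
      using frequently_ex by blast
    define t where "t = real Q"
    have t1: "t \<ge> 1" and t0: "t > 0" unfolding t_def using Q3 by auto
    define mn where "mn = Min {distZ (real_of_int q *\<^sub>R \<alpha>) | q::int. 0 < q \<and> q \<le> int Q}"
    define \<delta> where "\<delta> = c' * t powr (-\<omega>')"
    define R where "R = (10 * M) ^ d / (t * \<delta> ^ d)"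
    have \<delta>0: "\<delta> > 0" unfolding \<delta>_def using c'0 t0 by simp
    have tpw: "t powr (-\<omega>') \<le> 1" using t1 \<omega>'pos powr_mono[of 0 \<omega>' t] by (simp add: powr_minus_divide)
    have \<delta>1: "\<delta> \<le> 1" unfolding \<delta>_def using c'0 tpw
      by (intro mult_le_one) auto
    have hyp: "\<exists>i. \<delta> \<le> \<bar>of_int q * \<alpha>$i - p$i\<bar>"
      if q1: "1 \<le> q" and qt: "real_of_int q \<le> t" and p: "p \<in> intvecs" for q p
    proof -
      have qQ: "q \<le> int Q" using qt unfolding t_def by linarith
      have mn0: "0 \<le> mn" unfolding mn_def using Min_facts(2)[OF q1 qQ] .
      have mnq: "mn \<le> distZ (real_of_int q *\<^sub>R \<alpha>)" unfolding mn_def using Min_facts(1)[OF q1 qQ] .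
      have "c \<le> t powr \<omega> * mn" using Qc mn0 unfolding mn_def t_def by simp
      hence "c / t powr \<omega> \<le> mn" using t0 by (simp add: divide_le_eq mult.commute)
      moreover have "\<delta> \<le> c / t powr \<omega>"
      proof -
        have "t powr (-\<omega>') \<le> t powr (-\<omega>)" using t1 \<omega>'ge by (intro powr_mono) auto
        hence "\<delta> \<le> c * t powr (-\<omega>)" unfolding \<delta>_def using c'0
          by (intro mult_mono) auto
        thus ?thesis by (simp add: powr_minus_divide)
      qed
      moreover have "distZ (real_of_int q *\<^sub>R \<alpha>) \<le> supnorm (real_of_int q *\<^sub>R \<alpha> - p)"
        using distZ_le[OF p] .
      moreover obtain i where "supnorm (real_of_int q *\<^sub>R \<alpha> - p) = \<bar>(real_of_int q *\<^sub>R \<alpha> - p)$i\<bar>"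
        using supnorm_attained by blast
      ultimately have "\<delta> \<le> \<bar>(real_of_int q *\<^sub>R \<alpha> - p)$i\<bar>" using mnq by linarith
      thus ?thesis by auto
    qed
    have \<delta>d: "\<delta> ^ d = c' ^ d * t powr (-\<omega>' * dr)"
      unfolding \<delta>_def dr_def using pow_powr_mult[OF t0] by simp
    have td: "t * \<delta> ^ d \<le> 1"
    proof -
      have cd1: "c' ^ d \<le> 1" using c'0 by (simp add: power_le_one)
      have tp: "t powr (-\<omega>' * dr) \<le> t powr (-1)" using t1 \<omega>'dr by (intro powr_mono) auto
      have "c' ^ d * t powr (-\<omega>' * dr) \<le> 1 * t powr (-\<omega>' * dr)"
        using cd1 by (intro mult_right_mono) auto
      hence "\<delta> ^ d \<le> t powr (-1)" unfolding \<delta>d using tp by simp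
      hence "\<delta> ^ d \<le> 1 / t" using t0 by (simp add: powr_minus_divide)
      thus ?thesis using t0 by (simp add: le_divide_eq mult.commute)
    qed
    have tdpos: "t * \<delta> ^ d > 0" using t0 \<delta>0 by simp
    have R1: "R \<ge> 1"
    proof -
      have "10 * M \<ge> 1" using M1 by simp
      hence "(10 * M) ^ d \<ge> 1" by (rule one_le_power)
      hence "t * \<delta> ^ d \<le> (10 * M) ^ d" using td by linarith
      hence "1 \<le> (10 * M) ^ d / (t * \<delta> ^ d)" using tdpos by (simp add: le_divide_eq)
      thus ?thesis unfolding R_def .
    qed
    have Rd_eq: "R * \<delta> = A1 * t powr (-\<kappa>1)"
    proof -
      have "R * \<delta> = A1 * t powr (\<omega>' * dr - \<omega>' - 1)"
        unfolding R_def \<delta>_def A1_def dr_def using alg_Rd[OF t0 c'0(1)] by simp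
      thus ?thesis unfolding \<kappa>1_def by (simp add: algebra_simps)
    qed
    have Rd: "R * \<delta> \<le> 1" using Rd_eq Q1 unfolding t_def by simp
    have cnt: "(10 * real (CARD('n) + 1)) ^ CARD('n) \<le> R * t * \<delta> ^ CARD('n)"
      unfolding R_def using tdpos t0 \<delta>0 unfolding M_def d_def by simp
    define W where "W = M * R * t"
    have W_eq: "W = A3 * t powr (\<omega>' * dr)"
      unfolding W_def R_def \<delta>_def A3_def dr_def by (rule alg_W[OF t0 c'0(1)])
    have W0: "W > 0" unfolding W_def using M1 R1 t0 by simp
    define T where "T = K0 * W"
    define z where "z = (T powr (-\<eta>)) *\<^sub>R x1"
    obtain q p where p: "p \<in> intvecs" and qT0: "\<bar>of_int q - T\<bar> \<le> real (CARD('n) + 1) * R * t"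
      and qz0: "\<forall>j. \<bar>of_int q * \<alpha>$j - p$j - z$j\<bar> \<le> real (CARD('n) + 1) * R * \<delta>"
      using covering[OF t0 \<delta>0 \<delta>1 hyp R1 Rd cnt, of T z] by blast
    have qT: "\<bar>of_int q - T\<bar> \<le> M * R * t" using qT0 unfolding M_def d_def .
    have qz: "\<bar>of_int q * \<alpha>$j - p$j - z$j\<bar> \<le> M * R * \<delta>" for j using qz0 unfolding M_def d_def by blast
    have qT': "\<bar>of_int q - T\<bar> \<le> W" using qT unfolding W_def .
    have T0: "T > 0" unfolding T_def using K0 W0 by simp
    have "K0 * W \<ge> 2 * W" using K0 W0 by (intro mult_right_mono) auto
    hence qlow: "real_of_int q \<ge> W" using qT' unfolding T_def by linarith
    hence qpos: "real_of_int q > 0" using W0 by linarith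
    have qhigh: "real_of_int q \<le> (K0 + 1) * W" using qT' unfolding T_def by (simp add: algebra_simps)
    define qe where "qe = real_of_int q powr \<eta>"
    define pt where "pt = (\<bar>real_of_int q\<bar> powr \<eta>) *\<^sub>R (real_of_int q *\<^sub>R \<alpha> - p)"
    have ptS: "pt \<in> {(\<bar>real_of_int q\<bar> powr \<eta>) *\<^sub>R (real_of_int q *\<^sub>R \<alpha> - p) | q p. q \<noteq> 0 \<and> p \<in> intvecs}"
    proof -
      have "real_of_int q \<noteq> 0" using qpos by simp
      hence "q \<noteq> 0" by simp
      thus ?thesis unfolding pt_def using p by blast
    qed
    define v where "v = real_of_int q *\<^sub>R \<alpha> - p - z"
    have nv: "norm v \<le> dr * (M * R * \<delta>)"
    proof -
      have "norm v \<le> (\<Sum>j\<in>UNIV. \<bar>v$j\<bar>)" by (rule norm_le_l1_cart)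
      also have "\<dots> \<le> real (card (UNIV :: 'n set)) * (M * R * \<delta>)"
        by (rule sum_bounded_above) (use qz in \<open>simp add: v_def\<close>)
      finally show ?thesis unfolding dr_def d_def by simp
    qed
    have pt_eq: "pt - x1 = qe *\<^sub>R v + (qe * T powr (-\<eta>) - 1) *\<^sub>R x1"
      unfolding pt_def v_def z_def qe_def using qpos by (simp add: algebra_simps)
    have "norm (pt - x1) \<le> norm (qe *\<^sub>R v) + norm ((qe * T powr (-\<eta>) - 1) *\<^sub>R x1)"
      unfolding pt_eq by (rule norm_triangle_ineq)
    also have "\<dots> = qe * norm v + \<bar>qe * T powr (-\<eta>) - 1\<bar> * norm x1"
      unfolding qe_def by simp
    also have "qe * norm v \<le> e / 8"
    proof -
      have "qe \<le> ((K0 + 1) * W) powr \<eta>" unfolding qe_def using qpos qhigh \<eta>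
        by (intro powr_mono2) auto
      hence "qe * norm v \<le> ((K0 + 1) * W) powr \<eta> * (dr * (M * R * \<delta>))"
        using nv by (intro mult_mono) (auto simp: qe_def)
      also have "((K0 + 1) * W) powr \<eta> * (dr * (M * R * \<delta>)) = A4 * t powr (-\<kappa>2)"
      proof -
        have "((K0 + 1) * W) powr \<eta> * (dr * (M * R * \<delta>))
            = ((K0 + 1) * A3 * t powr (\<omega>' * dr)) powr \<eta> * ((dr * M * A1) * t powr (-\<kappa>1))"
          unfolding W_eq using Rd_eq by (simp add: algebra_simps)
        also have "\<dots> = A4 * t powr (\<omega>' * dr * \<eta> + -\<kappa>1)"
          unfolding A4_def by (rule alg_final[OF t0]) (use K0 A3 in simp)
        also have "\<omega>' * dr * \<eta> + -\<kappa>1 = -\<kappa>2" unfolding \<kappa>1_def \<kappa>2_def by simp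
        finally show ?thesis .
      qed
      also have "\<dots> \<le> e / 8" using Q2 unfolding t_def .
      finally show ?thesis .
    qed
    also have "\<bar>qe * T powr (-\<eta>) - 1\<bar> * norm x1 \<le> e / 8"
    proof -
      have "qe * T powr (-\<eta>) = (real_of_int q / T) powr \<eta>"
        unfolding qe_def using qpos T0 by (simp add: powr_divide powr_minus_divide)
      hence "\<bar>qe * T powr (-\<eta>) - 1\<bar> \<le> \<bar>real_of_int q / T - 1\<bar>"
        using powr_near_one[of "real_of_int q / T" \<eta>] qpos T0 \<eta>(1) \<eta>1 by simp
      also have "\<bar>real_of_int q / T - 1\<bar> = \<bar>real_of_int q - T\<bar> / T" using T0 by (simp add: field_simps)
      also have "\<dots> \<le> W / T" using qT' T0 by (simp add: divide_right_mono)
      also have "\<dots> = 1 / K0" unfolding T_def using W0 K0 by simp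
      finally have "\<bar>qe * T powr (-\<eta>) - 1\<bar> * norm x1 \<le> 1 / K0 * norm x1"
        by (intro mult_right_mono) auto
      hence "\<bar>qe * T powr (-\<eta>) - 1\<bar> * norm x1 \<le> norm x1 / K0" by simp
      thus ?thesis using K0x by linarith
    qed
    finally have d1: "dist pt x1 \<le> e / 4" unfolding dist_norm by simp
    show "\<exists>x'\<in>{(\<bar>real_of_int q\<bar> powr \<eta>) *\<^sub>R (real_of_int q *\<^sub>R \<alpha> - p) | q p. q \<noteq> 0 \<and> p \<in> intvecs}.
            x' \<noteq> x \<and> dist x' x < e"
    proof (intro bexI conjI)
      show "pt \<noteq> x"
      proof
        assume "pt = x"
        hence "dist x1 x \<le> e / 4" using d1 by (simp add: dist_commute)
        thus False using dx1 e by linarith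
      qed
      show "dist pt x < e" using d1 dx1 e dist_triangle[of pt x x1] by linarith
    qed (rule ptS)
  qed
qed

theorem lemma6:
  fixes \<eta> \<omega> :: real
  assumes "0 < \<eta>" and "\<eta> < 1 / real CARD('n::finite)"
    and "0 < \<omega>" and "\<omega> < 1 / (real CARD('n) * \<eta> + real CARD('n) - 1)"
  shows "(UNIV - (Dset \<eta> :: (real^'n) set)) - (UNIV - Kset) \<subseteq> Sset \<omega>"
proof
  fix \<alpha> :: "real^'n" assume "\<alpha> \<in> (UNIV - Dset \<eta>) - (UNIV - Kset)"
  hence nD: "\<alpha> \<notin> Dset \<eta>" and K: "\<alpha> \<in> Kset" by auto
  show "\<alpha> \<in> Sset \<omega>"
  proof (rule ccontr)
    assume nS: "\<alpha> \<notin> Sset \<omega>"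
    define f where "f = (\<lambda>Q::nat. real Q powr \<omega> *
        Min {distZ (real_of_int q *\<^sub>R \<alpha>) | q::int. 0 < q \<and> q \<le> int Q})"
    have nt: "\<not> (f \<longlonglongrightarrow> 0)" using nS K unfolding Sset_def f_def by auto
    obtain c where c: "c > 0" and nev: "\<not> eventually (\<lambda>Q. dist (f Q) 0 < c) sequentially"
      using nt unfolding tendsto_iff by blast
    have fr: "frequently (\<lambda>Q. c \<le> \<bar>f Q\<bar>) sequentially"
      using nev unfolding not_eventually by (rule frequently_elim1) (simp add: dist_real_def)
    have "x \<in> accA \<eta> \<alpha>" for x
      using main_acc[OF assms c, of \<alpha> x] fr unfolding f_def by blast
    hence "\<alpha> \<in> Dset \<eta>" unfolding Dset_def by auto
    thus False using nD by simp
  qed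
qed

end
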